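(* Let $G$ be a finite connected graph (loops and multiple edges allowed) and $\alpha(G)$ the number of Eulerian equivalence classes of $\mathcal{BO}(G)$. Then: (i) if $G$ has a single vertex and no edges, $\alpha(G)=1$; (ii) if $e$ is a loop, $\alpha(G)=\alpha(G-e)$; (iii) if $e$ is a bridge, $\alpha(G)=0$; (iv) if $e$ is neither a bridge nor a loop, $\alpha(G)=\alpha(G-e)+\alpha(G/e)$.
   Context: An orientation of $G=(V,E)$ assigns a direction to each edge. For a partition $V=S\sqcup T$ with $S,T\neq\emptyset$, $[S,T]$ denotes the set of edges joining $S$ and $T$ (a cut); a bond is a minimal nonempty cut. For an orientation $\varepsilon$, $(S,T)_\varepsilon$ is the set of edges of $[S,T]$ directed from $S$ to $T$. A bond $[S,T]$ is directed if $(S,T)_\varepsilon=\emptyset$ or $(T,S)_\varepsilon=\emptyset$; a cut is directed if it is a disjoint union of directed bonds. $\mathcal{BO}(G)$ is the set of orientations of $G$ with no (nonempty) directed cut (for connected $G$: the totally cyclic orientations). Two orientations $\varepsilon_1,\varepsilon_2$ are Eulerian equivalent if the spanning subgraph formed by the edges $\{e:\varepsilon_1(e)\neq\varepsilon_2(e)\}$, oriented by $\varepsilon_1$, has in-degree equal to out-degree at every vertex. $G-e$ is deletion and $G/e$ contraction of $e$. *)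

theory Defs
  imports Main
begin

text \<open>Each edge e carries a
reference pair ends e = (x, y); an orientation eps assigns True if e is directed
from x to y and False if from y to x. Orientations are extensional
(False outside the edge set) so that they form a finite set.\<close>

record ('v, 'e) mgraph =
  verts :: "'v set"
  edges :: "'e set"
  ends  :: "'e \<Rightarrow> 'v \<times> 'v"

definition wf_graph :: "('v, 'e) mgraph \<Rightarrow> bool" where
  "wf_graph G \<longleftrightarrow> finite (verts G) \<and> finite (edges G) \<and>
     (\<forall>e\<in>edges G. fst (ends G e) \<in> verts G \<and> snd (ends G e) \<in> verts G)"

definition is_loop :: "('v, 'e) mgraph \<Rightarrow> 'e \<Rightarrow> bool" where
  "is_loop G e \<longleftrightarrow> fst (ends G e) = snd (ends G e)"

definition adj :: "('v, 'e) mgraph \<Rightarrow> ('v \<times> 'v) set" where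
  "adj G = {(x, y). \<exists>e\<in>edges G. ends G e = (x, y) \<or> ends G e = (y, x)}"

definition connected_graph :: "('v, 'e) mgraph \<Rightarrow> bool" where
  "connected_graph G \<longleftrightarrow> verts G \<noteq> {} \<and>
     (\<forall>u\<in>verts G. \<forall>v\<in>verts G. (u, v) \<in> (adj G)\<^sup>*)"

definition delete_edge :: "('v, 'e) mgraph \<Rightarrow> 'e \<Rightarrow> ('v, 'e) mgraph" where
  "delete_edge G e = G\<lparr>edges := edges G - {e}\<rparr>"

definition contract_edge :: "('v, 'e) mgraph \<Rightarrow> 'e \<Rightarrow> ('v, 'e) mgraph" where
  "contract_edge G e =
     (let u = fst (ends G e); v = snd (ends G e);
          f = (\<lambda>x. if x = v then u else x)
      in \<lparr>verts = f ` verts G, edges = edges G - {e},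
          ends = (\<lambda>d. (f (fst (ends G d)), f (snd (ends G d))))\<rparr>)"

definition is_bridge :: "('v, 'e) mgraph \<Rightarrow> 'e \<Rightarrow> bool" where
  "is_bridge G e \<longleftrightarrow> e \<in> edges G \<and>
     (\<exists>u\<in>verts G. \<exists>v\<in>verts G. (u, v) \<in> (adj G)\<^sup>* \<and> (u, v) \<notin> (adj (delete_edge G e))\<^sup>*)"

definition orientations :: "('v, 'e) mgraph \<Rightarrow> ('e \<Rightarrow> bool) set" where
  "orientations G = {eps. \<forall>e. e \<notin> edges G \<longrightarrow> \<not> eps e}"

definition otail :: "('v, 'e) mgraph \<Rightarrow> ('e \<Rightarrow> bool) \<Rightarrow> 'e \<Rightarrow> 'v" where
  "otail G eps e = (if eps e then fst (ends G e) else snd (ends G e))"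

definition ohead :: "('v, 'e) mgraph \<Rightarrow> ('e \<Rightarrow> bool) \<Rightarrow> 'e \<Rightarrow> 'v" where
  "ohead G eps e = (if eps e then snd (ends G e) else fst (ends G e))"

definition vpartition :: "('v, 'e) mgraph \<Rightarrow> 'v set \<Rightarrow> 'v set \<Rightarrow> bool" where
  "vpartition G S T \<longleftrightarrow> S \<union> T = verts G \<and> S \<inter> T = {} \<and> S \<noteq> {} \<and> T \<noteq> {}"

definition cut_edges :: "('v, 'e) mgraph \<Rightarrow> 'v set \<Rightarrow> 'v set \<Rightarrow> 'e set" where
  "cut_edges G S T = {e\<in>edges G.
     (fst (ends G e) \<in> S \<and> snd (ends G e) \<in> T) \<or> (fst (ends G e) \<in> T \<and> snd (ends G e) \<in> S)}"

definition dir_edges :: "('v, 'e) mgraph \<Rightarrow> ('e \<Rightarrow> bool) \<Rightarrow> 'v set \<Rightarrow> 'v set \<Rightarrow> 'e set" where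
  "dir_edges G eps S T = {e\<in>cut_edges G S T. otail G eps e \<in> S \<and> ohead G eps e \<in> T}"

definition is_cut :: "('v, 'e) mgraph \<Rightarrow> 'e set \<Rightarrow> bool" where
  "is_cut G C \<longleftrightarrow> (\<exists>S T. vpartition G S T \<and> C = cut_edges G S T)"

definition is_bond :: "('v, 'e) mgraph \<Rightarrow> 'e set \<Rightarrow> bool" where
  "is_bond G B \<longleftrightarrow> is_cut G B \<and> B \<noteq> {} \<and>
     (\<forall>C. is_cut G C \<and> C \<noteq> {} \<and> C \<subseteq> B \<longrightarrow> C = B)"

definition directed_bond :: "('v, 'e) mgraph \<Rightarrow> ('e \<Rightarrow> bool) \<Rightarrow> 'e set \<Rightarrow> bool" where
  "directed_bond G eps B \<longleftrightarrow> is_bond G B \<and>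
     (\<exists>S T. vpartition G S T \<and> B = cut_edges G S T \<and>
        (dir_edges G eps S T = {} \<or> dir_edges G eps T S = {}))"

definition directed_cut :: "('v, 'e) mgraph \<Rightarrow> ('e \<Rightarrow> bool) \<Rightarrow> 'e set \<Rightarrow> bool" where
  "directed_cut G eps C \<longleftrightarrow> is_cut G C \<and>
     (\<exists>\<B>. (\<forall>B\<in>\<B>. directed_bond G eps B) \<and> pairwise disjnt \<B> \<and> \<Union>\<B> = C)"

definition BO :: "('v, 'e) mgraph \<Rightarrow> ('e \<Rightarrow> bool) set" where
  "BO G = {eps \<in> orientations G. \<not> (\<exists>C. C \<noteq> {} \<and> directed_cut G eps C)}"

text \<open>Eulerian equivalence: the edges where eps1, eps2 differ, oriented by eps1,
have in-degree = out-degree at every vertex (a loop contributes one to each).\<close>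
definition euler_equiv :: "('v, 'e) mgraph \<Rightarrow> ('e \<Rightarrow> bool) \<Rightarrow> ('e \<Rightarrow> bool) \<Rightarrow> bool" where
  "euler_equiv G eps1 eps2 \<longleftrightarrow> (\<forall>v\<in>verts G.
     card {e\<in>edges G. eps1 e \<noteq> eps2 e \<and> ohead G eps1 e = v} =
     card {e\<in>edges G. eps1 e \<noteq> eps2 e \<and> otail G eps1 e = v})"

definition alpha :: "('v, 'e) mgraph \<Rightarrow> nat" where
  "alpha G = card (BO G // {(a, b). a \<in> BO G \<and> b \<in> BO G \<and> euler_equiv G a b})"

end

theory Submission
  imports Defs
begin

definition idg :: "('v, 'e) mgraph \<Rightarrow> ('e \<Rightarrow> bool) \<Rightarrow> 'v \<Rightarrow> nat" where
  "idg G eps x = (if x \<in> verts G then card {d\<in>edges G. ohead G eps d = x} else 0)"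

lemma card_split2:
  assumes "finite A"
  shows "card {d\<in>A. P d} = card {d\<in>A. Q d \<and> P d} + card {d\<in>A. \<not> Q d \<and> P d}"
proof -
  have "{d\<in>A. P d} = {d\<in>A. Q d \<and> P d} \<union> {d\<in>A. \<not> Q d \<and> P d}" by auto
  moreover have "{d\<in>A. Q d \<and> P d} \<inter> {d\<in>A. \<not> Q d \<and> P d} = {}" by auto
  ultimately show ?thesis using assms by (simp add: card_Un_disjoint)
qed

lemma euler_iff:
  assumes "finite (edges G)"
  shows "euler_equiv G a b \<longleftrightarrow> idg G a = idg G b"
proof -
  have key: "card {d\<in>edges G. ohead G b d = x} =
     card {d\<in>edges G. a d = b d \<and> ohead G a d = x} + card {d\<in>edges G. a d \<noteq> b d \<and> otail G a d = x}"
    for x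
  proof -
    have "card {d\<in>edges G. ohead G b d = x} =
      card {d\<in>edges G. a d = b d \<and> ohead G b d = x} + card {d\<in>edges G. \<not> a d = b d \<and> ohead G b d = x}"
      by (rule card_split2[OF assms])
    moreover have "{d\<in>edges G. a d = b d \<and> ohead G b d = x} = {d\<in>edges G. a d = b d \<and> ohead G a d = x}"
      by (auto simp: ohead_def)
    moreover have "{d\<in>edges G. \<not> a d = b d \<and> ohead G b d = x} = {d\<in>edges G. a d \<noteq> b d \<and> otail G a d = x}"
      by (auto simp: ohead_def otail_def)
    ultimately show ?thesis by simp
  qed
  have key2: "card {d\<in>edges G. ohead G a d = x} =
     card {d\<in>edges G. a d = b d \<and> ohead G a d = x} + card {d\<in>edges G. a d \<noteq> b d \<and> ohead G a d = x}"
    for x by (rule card_split2[OF assms])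
  show ?thesis
    unfolding euler_equiv_def fun_eq_iff idg_def by (auto simp: key key2)
qed

lemma quotient_card:
  "card (A // {(a, b). a \<in> A \<and> b \<in> A \<and> f a = f b}) = card (f ` A)"
proof -
  let ?r = "{(a, b). a \<in> A \<and> b \<in> A \<and> f a = f b}"
  let ?g = "\<lambda>y. {a\<in>A. f a = y}"
  have "A // ?r = (\<lambda>x. ?r``{x}) ` A" unfolding quotient_def by auto
  also have "\<dots> = (\<lambda>x. ?g (f x)) ` A"
    by (rule image_cong) auto
  also have "\<dots> = ?g ` (f ` A)" by (simp add: image_image)
  finally have "A // ?r = ?g ` (f ` A)" .
  moreover have "inj_on ?g (f ` A)"
  proof (rule inj_onI)
    fix y1 y2 assume "y1 \<in> f ` A" "y2 \<in> f ` A" "?g y1 = ?g y2"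
    then obtain a where "a \<in> A" "f a = y1" by auto
    then have "a \<in> ?g y1" by auto
    then have "a \<in> ?g y2" using \<open>?g y1 = ?g y2\<close> by simp
    then show "y1 = y2" using \<open>f a = y1\<close> by auto
  qed
  ultimately show ?thesis by (simp add: card_image)
qed

lemma alpha_card:
  assumes "finite (edges G)"
  shows "alpha G = card (idg G ` BO G)"
proof -
  have "{(a, b). a \<in> BO G \<and> b \<in> BO G \<and> euler_equiv G a b} =
        {(a, b). a \<in> BO G \<and> b \<in> BO G \<and> idg G a = idg G b}"
    using euler_iff[OF assms] by auto
  then show ?thesis unfolding alpha_def by (simp only: quotient_card)
qed

definition tc :: "('v, 'e) mgraph \<Rightarrow> ('e \<Rightarrow> bool) \<Rightarrow> bool" where
  "tc G eps \<longleftrightarrow> (\<forall>S T. vpartition G S T \<longrightarrow> cut_edges G S T \<noteq> {} \<longrightarrow>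
      dir_edges G eps S T \<noteq> {} \<and> dir_edges G eps T S \<noteq> {})"

lemma cut_th: "d \<in> cut_edges G S T \<longleftrightarrow> d \<in> edges G \<and>
   ((otail G eps d \<in> S \<and> ohead G eps d \<in> T) \<or> (otail G eps d \<in> T \<and> ohead G eps d \<in> S))"
  by (auto simp: cut_edges_def otail_def ohead_def)

lemma dir_th: "d \<in> dir_edges G eps S T \<longleftrightarrow> d \<in> edges G \<and> otail G eps d \<in> S \<and> ohead G eps d \<in> T"
  by (auto simp: dir_edges_def cut_th[of _ _ _ _ eps])

lemma cut_sym: "cut_edges G S T = cut_edges G T S"
  by (auto simp: cut_edges_def)

lemma vpartition_sym: "vpartition G S T \<longleftrightarrow> vpartition G T S"
  by (auto simp: vpartition_def)

lemma bond_core: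
  assumes fin: "finite (edges G)"
    and P0: "vpartition G S0 T0" "dir_edges G eps T0 S0 = {}"
    and minimal: "\<And>S T. vpartition G S T \<Longrightarrow> cut_edges G S T \<noteq> {} \<Longrightarrow> dir_edges G eps T S = {}
        \<Longrightarrow> cut_edges G S T \<subseteq> cut_edges G S0 T0 \<Longrightarrow> cut_edges G S T = cut_edges G S0 T0"
    and PC: "vpartition G S2 T2" "cut_edges G S2 T2 \<subseteq> cut_edges G S0 T0" "cut_edges G S2 T2 \<noteq> {}"
    and x: "x \<in> cut_edges G S0 T0" "otail G eps x \<in> S2" "ohead G eps x \<in> S2"
  shows False
proof -
  let ?tl = "otail G eps" and ?hd = "ohead G eps" and ?V = "verts G"
  let ?B = "cut_edges G S0 T0" and ?C = "cut_edges G S2 T2"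
  have Bdir: "?tl y \<in> S0 \<and> ?hd y \<in> T0 \<and> y \<in> edges G" if "y \<in> ?B" for y
  proof -
    have "y \<notin> dir_edges G eps T0 S0" using P0(2) by simp
    then show ?thesis using that unfolding cut_th[of _ _ _ _ eps] dir_th by blast
  qed
  have CB: "y \<in> ?B" if "y \<in> ?C" for y using that PC(2) by blast
  have S0V: "S0 \<subseteq> ?V" "T0 \<subseteq> ?V" "S0 \<inter> T0 = {}" using P0(1) by (auto simp: vpartition_def)
  have S2V: "S2 \<union> T2 = ?V" "S2 \<inter> T2 = {}" using PC(1) by (auto simp: vpartition_def)
  have V0: "z \<in> ?V \<longleftrightarrow> z \<in> S0 \<or> z \<in> T0" for z using P0(1) by (auto simp: vpartition_def)
  have V2: "z \<in> ?V \<longleftrightarrow> z \<in> S2 \<or> z \<in> T2" for z using PC(1) by (auto simp: vpartition_def)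
  have D0: "z \<in> S0 \<Longrightarrow> z \<notin> T0" for z using S0V by blast
  have D2: "z \<in> S2 \<Longrightarrow> z \<notin> T2" for z using S2V by blast
  define a where "a = S0 \<inter> S2"
  define c where "c = T0 \<inter> S2"
  have xa: "?tl x \<in> a" and xc: "?hd x \<in> c" using Bdir[OF x(1)] x by (auto simp: a_def c_def)
  have inC: "y \<in> ?C" if "y \<in> edges G" "?tl y \<in> S2" "?hd y \<in> T2" for y
    using that unfolding cut_th[of _ _ _ _ eps] by blast
  have inC': "y \<in> ?C" if "y \<in> edges G" "?tl y \<in> T2" "?hd y \<in> S2" for y
    using that unfolding cut_th[of _ _ _ _ eps] by blast
  have inB: "y \<in> ?B" if "y \<in> edges G" "?tl y \<in> S0" "?hd y \<in> T0" for y
    using that unfolding cut_th[of _ _ _ _ eps] by blast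
  have inB': "y \<in> ?B" if "y \<in> edges G" "?tl y \<in> T0" "?hd y \<in> S0" for y
    using that unfolding cut_th[of _ _ _ _ eps] by blast
  have pa: "vpartition G a (?V - a)"
    unfolding vpartition_def using xa xc S0V by (auto simp: a_def c_def)
  have cut_a_B: "cut_edges G a (?V - a) \<subseteq> ?B"
  proof
    fix y assume y: "y \<in> cut_edges G a (?V - a)"
    then have yE: "y \<in> edges G" by (simp add: cut_th[of _ _ _ _ eps])
    from y have "(?tl y \<in> a \<and> ?hd y \<in> ?V - a) \<or> (?tl y \<in> ?V - a \<and> ?hd y \<in> a)"
      by (simp add: cut_th[of _ _ _ _ eps])
    then show "y \<in> ?B"
    proof
      assume h: "?tl y \<in> a \<and> ?hd y \<in> ?V - a"
      show ?thesis
      proof (cases "?hd y \<in> T0")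
        case True then show ?thesis using h True by (intro inB[OF yE]) (auto simp: a_def)
      next
        case False
        then have "?hd y \<in> T2" using h V0 V2 unfolding a_def by blast
        then show ?thesis using h \<open>_ \<in> T2\<close> by (intro CB inC[OF yE]) (auto simp: a_def)
      qed
    next
      assume h: "?tl y \<in> ?V - a \<and> ?hd y \<in> a"
      show ?thesis
      proof (cases "?tl y \<in> T0")
        case True then show ?thesis using h True by (intro inB'[OF yE]) (auto simp: a_def)
      next
        case False
        then have "?tl y \<in> T2" using h V0 V2 unfolding a_def by blast
        then show ?thesis using h \<open>_ \<in> T2\<close> by (intro CB inC'[OF yE]) (auto simp: a_def)
      qed
    qed
  qed
  have dir_a: "dir_edges G eps (?V - a) a = {}"
  proof (rule ccontr)
    assume "dir_edges G eps (?V - a) a \<noteq> {}"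
    then obtain y where "y \<in> dir_edges G eps (?V - a) a" by blast
    then have y: "y \<in> edges G" "?tl y \<in> ?V - a" "?hd y \<in> a" by (auto simp: dir_th)
    then have "y \<in> cut_edges G a (?V - a)" by (auto simp: cut_th[of _ _ _ _ eps])
    then have "y \<in> ?B" using cut_a_B by blast
    then show False using Bdir y S0V by (auto simp: a_def)
  qed
  have xcuta: "x \<in> cut_edges G a (?V - a)"
    using xa xc Bdir[OF x(1)] S0V by (auto simp: cut_th[of _ _ _ _ eps] a_def c_def)
  have eqa: "cut_edges G a (?V - a) = ?B"
    using minimal[OF pa _ dir_a cut_a_B] xcuta by blast
  have pc: "vpartition G (?V - c) c"
    unfolding vpartition_def using xa xc S0V by (auto simp: a_def c_def)
  have cut_c_B: "cut_edges G (?V - c) c \<subseteq> ?B"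
  proof
    fix y assume y: "y \<in> cut_edges G (?V - c) c"
    then have yE: "y \<in> edges G" by (simp add: cut_th[of _ _ _ _ eps])
    from y have "(?tl y \<in> ?V - c \<and> ?hd y \<in> c) \<or> (?tl y \<in> c \<and> ?hd y \<in> ?V - c)"
      by (simp add: cut_th[of _ _ _ _ eps])
    then show "y \<in> ?B"
    proof
      assume h: "?tl y \<in> ?V - c \<and> ?hd y \<in> c"
      show ?thesis
      proof (cases "?tl y \<in> S0")
        case True then show ?thesis using h True by (intro inB[OF yE]) (auto simp: c_def)
      next
        case False
        then have "?tl y \<in> T2" using h V0 V2 unfolding c_def by blast
        then show ?thesis using h \<open>_ \<in> T2\<close> by (intro CB inC'[OF yE]) (auto simp: c_def)
      qed
    next
      assume h: "?tl y \<in> c \<and> ?hd y \<in> ?V - c"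
      show ?thesis
      proof (cases "?hd y \<in> S0")
        case True then show ?thesis using h True by (intro inB'[OF yE]) (auto simp: c_def)
      next
        case False
        then have "?hd y \<in> T2" using h V0 V2 unfolding c_def by blast
        then show ?thesis using h \<open>_ \<in> T2\<close> by (intro CB inC[OF yE]) (auto simp: c_def)
      qed
    qed
  qed
  have dir_c: "dir_edges G eps c (?V - c) = {}"
  proof (rule ccontr)
    assume "dir_edges G eps c (?V - c) \<noteq> {}"
    then obtain y where "y \<in> dir_edges G eps c (?V - c)" by blast
    then have y: "y \<in> edges G" "?tl y \<in> c" "?hd y \<in> ?V - c" by (auto simp: dir_th)
    then have "y \<in> cut_edges G (?V - c) c" by (auto simp: cut_th[of _ _ _ _ eps])
    then have "y \<in> ?B" using cut_c_B by blast
    then show False using Bdir y S0V by (auto simp: c_def)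
  qed
  have xcutc: "x \<in> cut_edges G (?V - c) c"
    using xa xc Bdir[OF x(1)] S0V by (auto simp: cut_th[of _ _ _ _ eps] a_def c_def)
  have eqc: "cut_edges G (?V - c) c = ?B"
    using minimal[OF pc _ dir_c cut_c_B] xcutc by blast
  obtain y where yC: "y \<in> ?C" using PC(3) by blast
  then have yB: "y \<in> ?B" using CB by blast
  have "y \<in> cut_edges G a (?V - a)" using yB eqa by simp
  then have "?tl y \<in> a \<or> ?hd y \<in> a" by (auto simp: cut_th[of _ _ _ _ eps])
  then have "?tl y \<in> a" using Bdir[OF yB] D0 unfolding a_def by blast
  moreover have "y \<in> cut_edges G (?V - c) c" using yB eqc by simp
  then have "?tl y \<in> c \<or> ?hd y \<in> c" by (auto simp: cut_th[of _ _ _ _ eps])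
  then have "?hd y \<in> c" using Bdir[OF yB] D0 unfolding c_def by blast
  ultimately show False using yC S2V by (auto simp: cut_th[of _ _ _ _ eps] a_def c_def)
qed

lemma exists_dbond:
  assumes fin: "finite (edges G)"
    and P: "vpartition G S T" "cut_edges G S T \<noteq> {}" "dir_edges G eps T S = {}"
  shows "\<exists>B. directed_bond G eps B \<and> B \<noteq> {}"
proof -
  let ?P = "\<lambda>p. vpartition G (fst p) (snd p) \<and> cut_edges G (fst p) (snd p) \<noteq> {} \<and>
              dir_edges G eps (snd p) (fst p) = {}"
  let ?m = "\<lambda>p. card (cut_edges G (fst p) (snd p))"
  have "?P (S, T)" using P by simp
  from ex_has_least_nat[of ?P "(S,T)" ?m, OF this]
  obtain p where p: "?P p" and pmin: "\<And>q. ?P q \<Longrightarrow> ?m p \<le> ?m q" by blast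
  obtain S0 T0 where pe: "p = (S0, T0)" by (cases p)
  let ?B = "cut_edges G S0 T0"
  have P0: "vpartition G S0 T0" "?B \<noteq> {}" "dir_edges G eps T0 S0 = {}" using p pe by auto
  have finB: "finite ?B" using fin by (rule rev_finite_subset) (auto simp: cut_edges_def)
  have minimal: "cut_edges G S' T' = ?B" if "vpartition G S' T'" "cut_edges G S' T' \<noteq> {}"
      "dir_edges G eps T' S' = {}" "cut_edges G S' T' \<subseteq> ?B" for S' T'
  proof (rule card_subset_eq[OF finB that(4)])
    have "?m p \<le> ?m (S', T')" using pmin[of "(S',T')"] that by simp
    then have "card ?B \<le> card (cut_edges G S' T')" using pe by simp
    moreover have "card (cut_edges G S' T') \<le> card ?B" using card_mono[OF finB that(4)] .
    ultimately show "card (cut_edges G S' T') = card ?B" by simp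
  qed
  have S0V: "S0 \<subseteq> verts G" "T0 \<subseteq> verts G" using P0(1) by (auto simp: vpartition_def)
  have Bdir: "otail G eps y \<in> S0 \<and> ohead G eps y \<in> T0 \<and> y \<in> edges G" if "y \<in> ?B" for y
  proof -
    have "y \<notin> dir_edges G eps T0 S0" using P0(3) by simp
    then show ?thesis using that unfolding cut_th[of _ _ _ _ eps] dir_th by blast
  qed
  have bond: "is_bond G ?B"
    unfolding is_bond_def
  proof (intro conjI allI impI)
    show "is_cut G ?B" using P0(1) by (auto simp: is_cut_def)
    show "?B \<noteq> {}" by (rule P0(2))
    fix C assume C: "is_cut G C \<and> C \<noteq> {} \<and> C \<subseteq> ?B"
    then obtain S2 T2 where S2: "vpartition G S2 T2" "C = cut_edges G S2 T2" by (auto simp: is_cut_def)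
    have V2: "z \<in> verts G \<longleftrightarrow> z \<in> S2 \<or> z \<in> T2" for z using S2(1) by (auto simp: vpartition_def)
    show "C = ?B"
    proof (rule ccontr)
      assume "C \<noteq> ?B"
      then obtain x where x: "x \<in> ?B" "x \<notin> C" using C by blast
      have xe: "otail G eps x \<in> S0" "ohead G eps x \<in> T0" "x \<in> edges G" using Bdir[OF x(1)] by auto
      then have xv: "otail G eps x \<in> verts G" "ohead G eps x \<in> verts G" using S0V by auto
      have nc: "\<not> ((otail G eps x \<in> S2 \<and> ohead G eps x \<in> T2) \<or> (otail G eps x \<in> T2 \<and> ohead G eps x \<in> S2))"
        using x(2) xe(3) S2(2) cut_th[of x G S2 T2 eps] by blast
      have "(otail G eps x \<in> S2 \<and> ohead G eps x \<in> S2) \<or> (otail G eps x \<in> T2 \<and> ohead G eps x \<in> T2)"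
        using nc xv V2 by blast
      then show False
      proof
        assume h: "otail G eps x \<in> S2 \<and> ohead G eps x \<in> S2"
        show False
          by (rule bond_core[OF fin P0(1) P0(3) minimal S2(1) _ _ x(1)]) (use C S2 h in auto)
      next
        assume h: "otail G eps x \<in> T2 \<and> ohead G eps x \<in> T2"
        have S2': "vpartition G T2 S2" using S2(1) vpartition_sym by blast
        show False
          by (rule bond_core[OF fin P0(1) P0(3) minimal S2' _ _ x(1)]) (use C S2 h cut_sym[of G T2 S2] in auto)
      qed
    qed
  qed
  have "directed_bond G eps ?B"
    unfolding directed_bond_def using bond P0 by blast
  then show ?thesis using P0(2) by blast
qed

lemma BO_char:
  assumes fin: "finite (edges G)"
  shows "BO G = {eps \<in> orientations G. tc G eps}"
proof (intro set_eqI iffI)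
  fix eps assume "eps \<in> {eps \<in> orientations G. tc G eps}"
  then have o: "eps \<in> orientations G" and t: "tc G eps" by auto
  have "\<not> directed_cut G eps C" if cne: "C \<noteq> {}" for C
  proof
    assume "directed_cut G eps C"
    then obtain BB where BB: "\<forall>B\<in>BB. directed_bond G eps B" "\<Union>BB = C"
      by (auto simp: directed_cut_def)
    obtain B where B: "B \<in> BB" "B \<noteq> {}" using BB(2) cne by blast
    then obtain S T where "vpartition G S T" "B = cut_edges G S T"
      "dir_edges G eps S T = {} \<or> dir_edges G eps T S = {}"
      using BB(1) B(1) unfolding directed_bond_def by blast
    then show False using t B(2) unfolding tc_def by blast
  qed
  then show "eps \<in> BO G" using o by (auto simp: BO_def)
next
  fix eps assume b: "eps \<in> BO G"
  then have o: "eps \<in> orientations G" by (simp add: BO_def)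
  have "tc G eps"
    unfolding tc_def
  proof (intro allI impI conjI)
    fix S T assume st: "vpartition G S T" "cut_edges G S T \<noteq> {}"
    have no: False if "directed_bond G eps B" "B \<noteq> {}" for B
    proof -
      have "is_cut G B" using that(1) by (auto simp: directed_bond_def is_bond_def)
      then have "directed_cut G eps B"
        unfolding directed_cut_def using that(1) by (intro conjI exI[of _ "{B}"]) auto
      then show False using b that(2) by (auto simp: BO_def)
    qed
    show "dir_edges G eps S T \<noteq> {}"
    proof
      assume "dir_edges G eps S T = {}"
      moreover have "vpartition G T S" using st(1) vpartition_sym by blast
      moreover have "cut_edges G T S \<noteq> {}" using st(2) cut_sym by metis
      ultimately show False using exists_dbond[OF fin] no by blast
    qed
    show "dir_edges G eps T S \<noteq> {}"
    proof
      assume "dir_edges G eps T S = {}"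
      then show False using exists_dbond[OF fin st] no by blast
    qed
  qed
  then show "eps \<in> {eps \<in> orientations G. tc G eps}" using o by simp
qed

lemma wf_fin: "wf_graph G \<Longrightarrow> finite (edges G)" by (simp add: wf_graph_def)

lemma part_i:
  assumes "verts G = {v}" "edges G = {}"
  shows "alpha G = 1"
proof -
  have o: "orientations G = {\<lambda>_. False}" using assms(2) by (auto simp: orientations_def)
  have nv: "\<not> vpartition G S T" for S T
  proof
    assume "vpartition G S T"
    then have h: "S \<union> T = {v}" "S \<inter> T = {}" "S \<noteq> {}" "T \<noteq> {}" using assms(1) by (auto simp: vpartition_def)
    obtain s t where "s \<in> S" "t \<in> T" using h(3,4) by blast
    then have "s = v" "t = v" using h(1) by blast+
    then show False using h(2) \<open>s \<in> S\<close> \<open>t \<in> T\<close> by blast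
  qed
  have "tc G (\<lambda>_. False)" unfolding tc_def using nv by blast
  then have "BO G = {\<lambda>_. False}" using BO_char[of G] assms(2) o by auto
  then show ?thesis using alpha_card[of G] assms(2) by simp
qed

lemma rtrancl_cross: "(x, y) \<in> R\<^sup>* \<Longrightarrow> x \<in> S \<Longrightarrow> y \<notin> S \<Longrightarrow> \<exists>a b. (a, b) \<in> R \<and> a \<in> S \<and> b \<notin> S"
  by (induction rule: rtrancl_induct) auto

lemma del_simps [simp]:
  "verts (delete_edge G e) = verts G" "edges (delete_edge G e) = edges G - {e}"
  "ends (delete_edge G e) = ends G"
  by (auto simp: delete_edge_def)

lemma del_ohead [simp]: "ohead (delete_edge G e) eps = ohead G eps"
  and del_otail [simp]: "otail (delete_edge G e) eps = otail G eps"
  by (auto simp: ohead_def otail_def fun_eq_iff)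

lemma part_iii:
  assumes wf: "wf_graph G" and br: "is_bridge G e"
  shows "alpha G = 0"
proof -
  let ?H = "delete_edge G e"
  obtain u v where uv: "u \<in> verts G" "v \<in> verts G" "(u, v) \<in> (adj G)\<^sup>*" "(u, v) \<notin> (adj ?H)\<^sup>*"
    and eE: "e \<in> edges G"
    using br by (auto simp: is_bridge_def)
  define S where "S = {x\<in>verts G. (u, x) \<in> (adj ?H)\<^sup>*}"
  define T where "T = verts G - S"
  have vp: "vpartition G S T" using uv unfolding vpartition_def S_def T_def by auto
  have sub: "cut_edges G S T \<subseteq> {e}"
  proof
    fix d assume d: "d \<in> cut_edges G S T"
    show "d \<in> {e}"
    proof (rule ccontr)
      assume "d \<notin> {e}"
      then have dH: "d \<in> edges ?H" using d by (auto simp: cut_edges_def)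
      obtain a b where ab: "ends G d = (a, b)" by fastforce
      have "(a, b) \<in> adj ?H" "(b, a) \<in> adj ?H" using dH ab by (auto simp: adj_def)
      moreover have "(a \<in> S \<and> b \<in> T) \<or> (a \<in> T \<and> b \<in> S)" using d ab by (auto simp: cut_edges_def)
      ultimately show False unfolding S_def T_def
        by (auto intro: rtrancl_into_rtrancl)
    qed
  qed
  have ne: "cut_edges G S T \<noteq> {}"
  proof -
    have "u \<in> S" "v \<notin> S" using uv by (auto simp: S_def)
    from rtrancl_cross[OF uv(3) this] obtain a b where ab: "(a, b) \<in> adj G" "a \<in> S" "b \<notin> S" by blast
    then obtain d where d: "d \<in> edges G" "ends G d = (a, b) \<or> ends G d = (b, a)" by (auto simp: adj_def)
    then have "b \<in> verts G" using wf by (auto simp: wf_graph_def)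
    then have "b \<in> T" using ab by (auto simp: T_def)
    then have "d \<in> cut_edges G S T" using d ab by (auto simp: cut_edges_def)
    then show ?thesis by blast
  qed
  have "\<not> tc G eps" for eps
  proof
    assume "tc G eps"
    then have "dir_edges G eps S T \<noteq> {}" "dir_edges G eps T S \<noteq> {}"
      using vp ne unfolding tc_def by blast+
    moreover have "dir_edges G eps S T \<subseteq> {e}" "dir_edges G eps T S \<subseteq> {e}"
      using sub cut_sym[of G S T] by (auto simp: dir_edges_def)
    ultimately have "e \<in> dir_edges G eps S T" "e \<in> dir_edges G eps T S" by blast+
    then show False using vp by (auto simp: dir_edges_def vpartition_def)
  qed
  then have "BO G = {}" using BO_char[OF wf_fin[OF wf]] by auto
  then show ?thesis using alpha_card[OF wf_fin[OF wf]] by simp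
qed

lemma ohead_upd: "d \<noteq> e \<Longrightarrow> ohead G (eps(e := b)) d = ohead G eps d"
  and otail_upd: "d \<noteq> e \<Longrightarrow> otail G (eps(e := b)) d = otail G eps d"
  by (auto simp: ohead_def otail_def)

lemma part_ii:
  assumes wf: "wf_graph G" and eE: "e \<in> edges G" and lp: "is_loop G e"
  shows "alpha G = alpha (delete_edge G e)"
proof -
  let ?H = "delete_edge G e"
  let ?f = "\<lambda>eps::'b\<Rightarrow>bool. eps(e := False)"
  define w where "w = fst (ends G e)"
  have wV: "w \<in> verts G" using wf eE by (auto simp: wf_graph_def w_def)
  have fin: "finite (edges G)" "finite (edges ?H)" using wf by (auto simp: wf_graph_def)
  have cutH: "cut_edges ?H S T = cut_edges G S T" if "vpartition G S T" for S T
    using that lp by (auto simp: cut_edges_def vpartition_def is_loop_def)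
  have dirH: "dir_edges ?H (?f eps) S T = dir_edges G eps S T" if "vpartition G S T" for S T eps
  proof -
    have "e \<notin> cut_edges G S T" using that lp by (auto simp: cut_edges_def vpartition_def is_loop_def)
    then show ?thesis using cutH[OF that]
      by (auto simp: dir_edges_def otail_def ohead_def)
  qed
  have vpH: "vpartition ?H S T = vpartition G S T" for S T by (simp add: vpartition_def)
  have tcH: "tc ?H (?f eps) = tc G eps" for eps
  proof -
    have "vpartition G S T \<Longrightarrow> dir_edges ?H (?f eps) T S = dir_edges G eps T S" for S T
      using dirH vpartition_sym by blast
    then show ?thesis unfolding tc_def vpH using cutH dirH by simp
  qed
  have img: "?f ` BO G = BO ?H"
  proof
    show "?f ` BO G \<subseteq> BO ?H"
      using tcH by (auto simp: BO_char fin orientations_def split: if_splits)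
  next
    show "BO ?H \<subseteq> ?f ` BO G"
    proof
      fix eps assume "eps \<in> BO ?H"
      then have o: "eps \<in> orientations ?H" and t: "tc ?H eps" by (auto simp: BO_char fin)
      then have ee: "eps e = False" by (auto simp: orientations_def)
      then have fe: "?f eps = eps" by (auto simp: fun_eq_iff)
      have "eps \<in> BO G" using o t tcH[of eps] fe by (auto simp: BO_char fin orientations_def)
      then show "eps \<in> ?f ` BO G" using fe[symmetric] by (rule rev_image_eqI[where f="\<lambda>eps. eps(e := False)"])
    qed
  qed
  define g where "g = (\<lambda>(\<delta>::'a\<Rightarrow>nat) x. \<delta> x + (if x = w then 1 else 0))"
  have idgf: "idg G eps = g (idg ?H (?f eps))" for eps
  proof
    fix x
    show "idg G eps x = g (idg ?H (?f eps)) x"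
    proof (cases "x \<in> verts G")
      case False
      then show ?thesis using wV by (auto simp: idg_def g_def)
    next
      case True
      have hw: "ohead G eps e = w" using lp by (auto simp: ohead_def is_loop_def w_def)
      have s1: "{d\<in>edges G. ohead G eps d = x} =
        {d\<in>edges ?H. ohead ?H (?f eps) d = x} \<union> (if x = w then {e} else {})"
        using hw eE by (auto simp: ohead_upd) (metis ohead_upd)
      have "card {d\<in>edges G. ohead G eps d = x} =
        card {d\<in>edges ?H. ohead ?H (?f eps) d = x} + (if x = w then 1 else 0)"
        unfolding s1 using fin(2) by (auto simp: card_insert_if)
      then show ?thesis using True by (simp add: idg_def g_def)
    qed
  qed
  have injg: "inj g"
    by (rule injI) (simp add: g_def fun_eq_iff)
  have "idg G ` BO G = g ` (idg ?H ` BO ?H)"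
    unfolding img[symmetric] image_image using idgf by simp
  then have "card (idg G ` BO G) = card (idg ?H ` BO ?H)"
    using card_image[OF inj_on_subset[OF injg]] by simp
  then show ?thesis using alpha_card fin by metis
qed

locale dc =
  fixes G :: "('v, 'e) mgraph" and e :: 'e
  assumes wf: "wf_graph G" and conn: "connected_graph G" and eE: "e \<in> edges G"
    and nb: "\<not> is_bridge G e" and nl: "\<not> is_loop G e"
begin

abbreviation "H \<equiv> delete_edge G e"
abbreviation "V \<equiv> verts G"
abbreviation "E' \<equiv> edges G - {e}"

definition u where "u = fst (ends G e)"
definition v where "v = snd (ends G e)"

definition arcs :: "('e \<Rightarrow> bool) \<Rightarrow> 'e set \<Rightarrow> ('v \<times> 'v) set" where
  "arcs eps F = {(otail G eps d, ohead G eps d) | d. d \<in> F}"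

definition PP :: "('e \<Rightarrow> bool) \<Rightarrow> bool" where
  "PP eps \<longleftrightarrow> (\<forall>S T. vpartition G S T \<longrightarrow> (u \<in> S \<longleftrightarrow> v \<in> S) \<longrightarrow> cut_edges H S T \<noteq> {} \<longrightarrow>
      dir_edges H eps S T \<noteq> {} \<and> dir_edges H eps T S \<noteq> {})"

lemma uv: "u \<in> V" "v \<in> V" "u \<noteq> v"
  using wf eE nl by (auto simp: wf_graph_def u_def v_def is_loop_def)

lemma finE: "finite (edges G)" "finite E'" using wf by (auto simp: wf_graph_def)

lemma ends_V: "d \<in> edges G \<Longrightarrow> otail G eps d \<in> V" "d \<in> edges G \<Longrightarrow> ohead G eps d \<in> V"
  using wf by (auto simp: wf_graph_def otail_def ohead_def)

lemma arcs_V: "(x, y) \<in> arcs eps F \<Longrightarrow> F \<subseteq> edges G \<Longrightarrow> x \<in> V \<and> y \<in> V"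
  using ends_V by (auto simp: arcs_def)

lemma H_conn: "a \<in> V \<Longrightarrow> b \<in> V \<Longrightarrow> (a, b) \<in> (adj H)\<^sup>*"
  using conn nb eE by (auto simp: connected_graph_def is_bridge_def)

lemma H_cut_ne: assumes "vpartition G S T" shows "cut_edges H S T \<noteq> {}"
proof -
  obtain a b where ab: "a \<in> S" "b \<in> T" using assms by (auto simp: vpartition_def)
  have V: "a \<in> V" "b \<in> V" "b \<notin> S" using assms ab by (auto simp: vpartition_def)
  from rtrancl_cross[OF H_conn[OF V(1,2)] ab(1) V(3)]
  obtain x y where xy: "(x, y) \<in> adj H" "x \<in> S" "y \<notin> S" by blast
  then obtain d where d: "d \<in> E'" "ends G d = (x, y) \<or> ends G d = (y, x)" by (auto simp: adj_def)
  then have "y \<in> V" using wf by (auto simp: wf_graph_def)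
  then have "y \<in> T" using xy assms by (auto simp: vpartition_def)
  then have "d \<in> cut_edges H S T" using d xy by (auto simp: cut_edges_def)
  then show ?thesis by blast
qed

lemma reach_iff:
  assumes "x \<in> V" "y \<in> V"
  shows "(x, y) \<in> (arcs eps E')\<^sup>* \<longleftrightarrow>
    (\<forall>S T. vpartition G S T \<longrightarrow> y \<in> S \<longrightarrow> x \<in> T \<longrightarrow> dir_edges H eps T S \<noteq> {})"
proof
  assume r: "(x, y) \<in> (arcs eps E')\<^sup>*"
  show "\<forall>S T. vpartition G S T \<longrightarrow> y \<in> S \<longrightarrow> x \<in> T \<longrightarrow> dir_edges H eps T S \<noteq> {}"
  proof (intro allI impI)
    fix S T assume st: "vpartition G S T" "y \<in> S" "x \<in> T"
    have "y \<notin> T" using st by (auto simp: vpartition_def)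
    from rtrancl_cross[OF r st(3) this] obtain p q where pq: "(p, q) \<in> arcs eps E'" "p \<in> T" "q \<notin> T"
      by blast
    then obtain d where d: "d \<in> E'" "otail G eps d = p" "ohead G eps d = q" by (auto simp: arcs_def)
    then have "q \<in> V" using ends_V by blast
    then have "q \<in> S" using pq st by (auto simp: vpartition_def)
    then have "d \<in> dir_edges H eps T S" using d pq by (auto simp: dir_th)
    then show "dir_edges H eps T S \<noteq> {}" by blast
  qed
next
  assume h: "\<forall>S T. vpartition G S T \<longrightarrow> y \<in> S \<longrightarrow> x \<in> T \<longrightarrow> dir_edges H eps T S \<noteq> {}"
  show "(x, y) \<in> (arcs eps E')\<^sup>*"
  proof (rule ccontr)
    assume nr: "(x, y) \<notin> (arcs eps E')\<^sup>*"
    define R where "R = {z\<in>V. (x, z) \<in> (arcs eps E')\<^sup>*}"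
    have vp: "vpartition G (V - R) R" using assms nr by (auto simp: vpartition_def R_def)
    have "y \<in> V - R" "x \<in> R" using assms nr by (auto simp: R_def)
    then have "dir_edges H eps R (V - R) \<noteq> {}" using h vp by blast
    then obtain d where "d \<in> dir_edges H eps R (V - R)" by blast
    then have d: "d \<in> E'" "otail G eps d \<in> R" "ohead G eps d \<in> V - R" by (auto simp: dir_th)
    then have "(otail G eps d, ohead G eps d) \<in> arcs eps E'" by (auto simp: arcs_def)
    then have "(x, ohead G eps d) \<in> (arcs eps E')\<^sup>*" using d(2) by (auto simp: R_def intro: rtrancl_into_rtrancl)
    then show False using d(3) by (auto simp: R_def)
  qed
qed

definition Qa where "Qa eps \<longleftrightarrow> (v, u) \<in> (arcs eps E')\<^sup>*"
definition Qb where "Qb eps \<longleftrightarrow> (u, v) \<in> (arcs eps E')\<^sup>*"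

lemma Qa_iff: "Qa eps \<longleftrightarrow> (\<forall>S T. vpartition G S T \<longrightarrow> u \<in> S \<longrightarrow> v \<in> T \<longrightarrow> dir_edges H eps T S \<noteq> {})"
  unfolding Qa_def using reach_iff[OF uv(2) uv(1)] .
lemma Qb_iff: "Qb eps \<longleftrightarrow> (\<forall>S T. vpartition G S T \<longrightarrow> v \<in> S \<longrightarrow> u \<in> T \<longrightarrow> dir_edges H eps T S \<noteq> {})"
  unfolding Qb_def using reach_iff[OF uv(1) uv(2)] .

lemma vpH: "vpartition H S T = vpartition G S T" by (simp add: vpartition_def)

lemma sides: "vpartition G S T \<Longrightarrow> (x \<in> T \<longleftrightarrow> x \<in> V \<and> x \<notin> S)"
  by (auto simp: vpartition_def)

lemma tc_H: "tc H eps \<longleftrightarrow> PP eps \<and> Qa eps \<and> Qb eps"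
proof
  assume t: "tc H eps"
  have "PP eps" using t unfolding PP_def tc_def vpH by blast
  moreover have "Qa eps" unfolding Qa_iff
    using t H_cut_ne unfolding tc_def vpH by blast
  moreover have "Qb eps" unfolding Qb_iff
    using t H_cut_ne unfolding tc_def vpH by blast
  ultimately show "PP eps \<and> Qa eps \<and> Qb eps" by blast
next
  assume h: "PP eps \<and> Qa eps \<and> Qb eps"
  show "tc H eps" unfolding tc_def vpH
  proof (intro allI impI)
    fix S T assume st: "vpartition G S T" "cut_edges H S T \<noteq> {}"
    have ts: "vpartition G T S" using st(1) vpartition_sym by blast
    consider "u \<in> S \<longleftrightarrow> v \<in> S" | "u \<in> S" "v \<in> T" | "v \<in> S" "u \<in> T"
      using st(1) uv sides by blast
    then show "dir_edges H eps S T \<noteq> {} \<and> dir_edges H eps T S \<noteq> {}"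
    proof cases
      case 1 then show ?thesis using h st unfolding PP_def by blast
    next
      case 2
      have "dir_edges H eps T S \<noteq> {}" using h 2 st(1) unfolding Qa_iff by blast
      moreover have "dir_edges H eps S T \<noteq> {}" using h 2 ts unfolding Qb_iff by blast
      ultimately show ?thesis by blast
    next
      case 3
      have "dir_edges H eps T S \<noteq> {}" using h 3 st(1) unfolding Qb_iff by blast
      moreover have "dir_edges H eps S T \<noteq> {}" using h 3 ts unfolding Qa_iff by blast
      ultimately show ?thesis by blast
    qed
  qed
qed

lemma e_tail: "otail G eps e = (if eps e then u else v)"
  and e_head: "ohead G eps e = (if eps e then v else u)"
  by (auto simp: otail_def ohead_def u_def v_def)

lemma dir_GH: "dir_edges H (eps(e := False)) S T = dir_edges G eps S T - {e}"
  by (auto simp: dir_th otail_upd ohead_upd) (metis otail_upd ohead_upd)+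

lemma cut_GH: "cut_edges H S T = cut_edges G S T - {e}"
  by (auto simp: cut_edges_def)

lemma e_dir: "e \<in> dir_edges G eps S T \<longleftrightarrow> otail G eps e \<in> S \<and> ohead G eps e \<in> T"
  using eE by (auto simp: dir_th)

lemma tc_G: "tc G eps \<longleftrightarrow> PP (eps(e := False)) \<and> (if eps e then Qa (eps(e := False)) else Qb (eps(e := False)))"
  (is "_ \<longleftrightarrow> PP ?e0 \<and> ?C")
proof
  assume t: "tc G eps"
  have "PP ?e0" unfolding PP_def
  proof (intro allI impI)
    fix S T assume st: "vpartition G S T" "u \<in> S \<longleftrightarrow> v \<in> S" "cut_edges H S T \<noteq> {}"
    have "cut_edges G S T \<noteq> {}" using st(3) cut_GH by auto
    then have d: "dir_edges G eps S T \<noteq> {}" "dir_edges G eps T S \<noteq> {}" using t st(1) unfolding tc_def by blast+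
    have "e \<notin> dir_edges G eps S T" "e \<notin> dir_edges G eps T S"
      using st(1,2) unfolding e_dir e_tail e_head by (auto simp: vpartition_def)
    then show "dir_edges H ?e0 S T \<noteq> {} \<and> dir_edges H ?e0 T S \<noteq> {}"
      using d unfolding dir_GH by auto
  qed
  moreover have ?C
  proof (cases "eps e")
    case True
    have "Qa ?e0" unfolding Qa_iff
    proof (intro allI impI)
      fix S T assume st: "vpartition G S T" "u \<in> S" "v \<in> T"
      have "e \<in> cut_edges G S T" using st eE by (auto simp: cut_edges_def u_def v_def)
      then have d: "dir_edges G eps T S \<noteq> {}" using t st(1) unfolding tc_def by blast
      have "e \<notin> dir_edges G eps T S" using st True unfolding e_dir e_tail e_head by (auto simp: vpartition_def)
      then show "dir_edges H ?e0 T S \<noteq> {}" using d unfolding dir_GH by auto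
    qed
    then show ?thesis using True by simp
  next
    case False
    have "Qb ?e0" unfolding Qb_iff
    proof (intro allI impI)
      fix S T assume st: "vpartition G S T" "v \<in> S" "u \<in> T"
      have "e \<in> cut_edges G S T" using st eE by (auto simp: cut_edges_def u_def v_def)
      then have d: "dir_edges G eps T S \<noteq> {}" using t st(1) unfolding tc_def by blast
      have "e \<notin> dir_edges G eps T S" using st False unfolding e_dir e_tail e_head by (auto simp: vpartition_def)
      then show "dir_edges H ?e0 T S \<noteq> {}" using d unfolding dir_GH by auto
    qed
    then show ?thesis using False by simp
  qed
  ultimately show "PP ?e0 \<and> ?C" by blast
next
  assume h: "PP ?e0 \<and> ?C"
  show "tc G eps" unfolding tc_def
  proof (intro allI impI)
    fix S T assume st: "vpartition G S T" "cut_edges G S T \<noteq> {}"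
    have ts: "vpartition G T S" using st(1) vpartition_sym by blast
    have sub: "dir_edges H ?e0 X Y \<subseteq> dir_edges G eps X Y" for X Y unfolding dir_GH by blast
    consider "u \<in> S \<longleftrightarrow> v \<in> S" | "u \<in> S" "v \<in> T" | "v \<in> S" "u \<in> T"
      using st(1) uv sides by blast
    then show "dir_edges G eps S T \<noteq> {} \<and> dir_edges G eps T S \<noteq> {}"
    proof cases
      case 1
      have "e \<notin> cut_edges G S T" using 1 st(1) by (auto simp: cut_edges_def u_def v_def vpartition_def)
      then have "cut_edges H S T \<noteq> {}" using st(2) cut_GH by auto
      then have "dir_edges H ?e0 S T \<noteq> {} \<and> dir_edges H ?e0 T S \<noteq> {}" using h 1 st(1) unfolding PP_def by blast
      then show ?thesis using sub by blast
    next
      case 2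
      show ?thesis
      proof (cases "eps e")
        case True
        have "e \<in> dir_edges G eps S T" using 2 True unfolding e_dir e_tail e_head by simp
        moreover have "dir_edges H ?e0 T S \<noteq> {}" using h True 2 st(1) unfolding Qa_iff by auto
        ultimately show ?thesis using sub by blast
      next
        case False
        have "e \<in> dir_edges G eps T S" using 2 False unfolding e_dir e_tail e_head by simp
        moreover have "dir_edges H ?e0 S T \<noteq> {}" using h False 2 ts unfolding Qb_iff by auto
        ultimately show ?thesis using sub by blast
      qed
    next
      case 3
      show ?thesis
      proof (cases "eps e")
        case True
        have "e \<in> dir_edges G eps T S" using 3 True unfolding e_dir e_tail e_head by simp
        moreover have "dir_edges H ?e0 S T \<noteq> {}" using h True 3 ts unfolding Qa_iff by auto
        ultimately show ?thesis using sub by blast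
      next
        case False
        have "e \<in> dir_edges G eps S T" using 3 False unfolding e_dir e_tail e_head by simp
        moreover have "dir_edges H ?e0 T S \<noteq> {}" using h False 3 st(1) unfolding Qb_iff by auto
        ultimately show ?thesis using sub by blast
      qed
    qed
  qed
qed

abbreviation "K \<equiv> contract_edge G e"
definition f where "f x = (if x = v then u else x)"

lemma K_verts: "verts K = V - {v}"
proof -
  have "verts K = f ` V" by (simp add: contract_edge_def Let_def f_def u_def v_def)
  also have "\<dots> = V - {v}" using uv by (auto simp: f_def image_def)
  finally show ?thesis .
qed

lemma K_edges: "edges K = E'" by (simp add: contract_edge_def Let_def)

lemma K_ends: "ends K d = (f (fst (ends G d)), f (snd (ends G d)))"
  by (simp add: contract_edge_def Let_def f_def u_def v_def)

lemma K_otail: "otail K eps d = f (otail G eps d)" and K_ohead: "ohead K eps d = f (ohead G eps d)"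
  by (auto simp: otail_def ohead_def K_ends)

lemma orient_K: "orientations K = orientations H"
  by (simp add: orientations_def K_edges)

lemma transfer:
  assumes "S = {x\<in>V. f x \<in> S'}" "T = {x\<in>V. f x \<in> T'}"
  shows "cut_edges K S' T' = cut_edges H S T" "dir_edges K eps S' T' = dir_edges H eps S T"
proof -
  have V: "d \<in> E' \<Longrightarrow> otail G eps d \<in> V \<and> ohead G eps d \<in> V" for d using ends_V by blast
  show "cut_edges K S' T' = cut_edges H S T"
    using V unfolding assms by (auto simp: cut_th[of _ _ _ _ eps] K_edges K_otail K_ohead)
  show "dir_edges K eps S' T' = dir_edges H eps S T"
    using V unfolding assms by (auto simp: dir_th K_edges K_otail K_ohead)
qed

lemma tc_K: "tc K eps \<longleftrightarrow> PP eps"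
proof
  assume t: "tc K eps"
  show "PP eps" unfolding PP_def
  proof (intro allI impI)
    fix S T assume st: "vpartition G S T" "u \<in> S \<longleftrightarrow> v \<in> S" "cut_edges H S T \<noteq> {}"
    have st2: "u \<in> T \<longleftrightarrow> v \<in> T" using st(1,2) uv sides by blast
    have eqS: "S = {x\<in>V. f x \<in> S - {v}}" using st(1,2) uv by (auto simp: f_def vpartition_def)
    have eqT: "T = {x\<in>V. f x \<in> T - {v}}" using st(1) st2 uv by (auto simp: f_def vpartition_def)
    have vK: "vpartition K (S - {v}) (T - {v})"
      using st(1,2) st2 uv unfolding vpartition_def K_verts by blast
    note tr = transfer[OF eqS eqT] transfer[OF eqT eqS]
    show "dir_edges H eps S T \<noteq> {} \<and> dir_edges H eps T S \<noteq> {}"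
    proof -
      have "cut_edges K (S - {v}) (T - {v}) \<noteq> {}" using st(3) tr by simp
      then have "dir_edges K eps (S - {v}) (T - {v}) \<noteq> {} \<and> dir_edges K eps (T - {v}) (S - {v}) \<noteq> {}"
        using t vK unfolding tc_def by blast
      then show ?thesis using tr by simp
    qed
  qed
next
  assume p: "PP eps"
  show "tc K eps" unfolding tc_def
  proof (intro allI impI)
    fix S' T' assume st: "vpartition K S' T'" "cut_edges K S' T' \<noteq> {}"
    define S where "S = {x\<in>V. f x \<in> S'}"
    define T where "T = {x\<in>V. f x \<in> T'}"
    note tr = transfer[OF S_def T_def] transfer[OF T_def S_def]
    have fV: "x \<in> V \<Longrightarrow> f x \<in> V - {v}" for x using uv by (auto simp: f_def)
    have fid: "x \<in> V - {v} \<Longrightarrow> f x = x" for x by (auto simp: f_def)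
    have s: "S' \<union> T' = V - {v}" "S' \<inter> T' = {}" "S' \<noteq> {}" "T' \<noteq> {}"
      using st(1) unfolding vpartition_def K_verts by auto
    have vp: "vpartition G S T" unfolding vpartition_def
    proof (intro conjI)
      show "S \<union> T = V" using fV s(1) by (auto simp: S_def T_def)
      show "S \<inter> T = {}" using s(2) by (auto simp: S_def T_def)
      obtain a where a: "a \<in> S'" using s(3) by blast
      then have "a \<in> V - {v}" using s(1) by blast
      then show "S \<noteq> {}" using a fid[of a] by (auto simp: S_def)
      obtain b where b: "b \<in> T'" using s(4) by blast
      then have "b \<in> V - {v}" using s(1) by blast
      then show "T \<noteq> {}" using b fid[of b] by (auto simp: T_def)
    qed
    have "u \<in> S \<longleftrightarrow> v \<in> S" using uv by (auto simp: S_def f_def)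
    then show "dir_edges K eps S' T' \<noteq> {} \<and> dir_edges K eps T' S' \<noteq> {}"
    proof -
      assume uvS: "u \<in> S \<longleftrightarrow> v \<in> S"
      have "cut_edges H S T \<noteq> {}" using st(2) tr by simp
      then have "dir_edges H eps S T \<noteq> {} \<and> dir_edges H eps T S \<noteq> {}"
        using p vp uvS unfolding PP_def by blast
      then show ?thesis using tr by simp
    qed
  qed
qed

definition \<pi> :: "('v \<Rightarrow> nat) \<Rightarrow> 'v \<Rightarrow> nat" where
  "\<pi> \<delta> = \<delta>(u := \<delta> u + \<delta> v, v := 0)"

lemma idg_out: "x \<notin> V \<Longrightarrow> idg H eps x = 0" by (simp add: idg_def)

lemma idg_K: "idg K eps = \<pi> (idg H eps)"
proof
  fix x
  show "idg K eps x = \<pi> (idg H eps) x"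
  proof (cases "x \<in> V - {v}")
    case False
    have "idg K eps x = 0" using False unfolding idg_def K_verts by auto
    moreover have "\<pi> (idg H eps) x = 0"
    proof (cases "x = v")
      case True then show ?thesis using uv by (simp add: \<pi>_def)
    next
      case False
      then have "x \<notin> V" "x \<noteq> u" using \<open>x \<notin> V - {v}\<close> uv by auto
      then show ?thesis by (simp add: \<pi>_def idg_def)
    qed
    ultimately show ?thesis by simp
  next
    case True
    show ?thesis
    proof (cases "x = u")
      case True
      have "{d\<in>E'. f (ohead G eps d) = u} = {d\<in>E'. ohead G eps d = u} \<union> {d\<in>E'. ohead G eps d = v}"
        by (auto simp: f_def)
      moreover have "card (\<dots>) = card {d\<in>E'. ohead G eps d = u} + card {d\<in>E'. ohead G eps d = v}"
        using finE uv by (intro card_Un_disjoint) auto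
      ultimately show ?thesis using True uv
        by (simp add: idg_def \<pi>_def K_verts K_edges K_ohead)
    next
      case False
      have "{d\<in>E'. f (ohead G eps d) = x} = {d\<in>E'. ohead G eps d = x}"
        using False \<open>x \<in> V - {v}\<close> by (auto simp: f_def)
      then show ?thesis using False \<open>x \<in> V - {v}\<close> uv
        by (simp add: idg_def \<pi>_def K_verts K_edges K_ohead)
    qed
  qed
qed

definition add1 :: "'v \<Rightarrow> ('v \<Rightarrow> nat) \<Rightarrow> 'v \<Rightarrow> nat" where
  "add1 w \<delta> = \<delta>(w := \<delta> w + 1)"

lemma idg_G: "idg G eps = add1 (ohead G eps e) (idg H (eps(e := False)))"
proof
  fix x
  have hV: "ohead G eps e \<in> V" using ends_V eE by blast
  show "idg G eps x = add1 (ohead G eps e) (idg H (eps(e := False))) x"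
  proof (cases "x \<in> V")
    case False
    then show ?thesis using hV by (auto simp: idg_def add1_def)
  next
    case True
    have s1: "{d\<in>edges G. ohead G eps d = x} =
        {d\<in>E'. ohead G (eps(e := False)) d = x} \<union> (if ohead G eps e = x then {e} else {})"
      using eE by (auto simp: ohead_upd) (metis ohead_upd)
    have "card {d\<in>edges G. ohead G eps d = x} =
        card {d\<in>E'. ohead G (eps(e := False)) d = x} + (if ohead G eps e = x then 1 else 0)"
      unfolding s1 using finE(2) by (auto simp: card_insert_if)
    then show ?thesis using True by (auto simp: idg_def add1_def)
  qed
qed

end

definition ar :: "('e \<Rightarrow> 'v) \<Rightarrow> ('e \<Rightarrow> 'v) \<Rightarrow> 'e set \<Rightarrow> ('v \<times> 'v) set" where
  "ar tf hf F = {(tf d, hf d) | d. d \<in> F}"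

inductive pth :: "('e \<Rightarrow> 'v) \<Rightarrow> ('e \<Rightarrow> 'v) \<Rightarrow> 'e set \<Rightarrow> 'v \<Rightarrow> 'v \<Rightarrow> 'e set \<Rightarrow> bool"
  for tf hf F where
  nil: "pth tf hf F x x {}"
| cons: "pth tf hf F w y D \<Longrightarrow> d \<in> F \<Longrightarrow> tf d = x \<Longrightarrow> hf d = w \<Longrightarrow>
     x \<notin> insert w (tf ` D \<union> hf ` D) \<Longrightarrow> pth tf hf F x y (insert d D)"

lemma pth_sub: "pth tf hf F x y D \<Longrightarrow> D \<subseteq> F \<and> finite D"
  by (induction rule: pth.induct) auto

lemma pth_end: "pth tf hf F x y D \<Longrightarrow> y \<in> insert x (tf ` D \<union> hf ` D)"
  by (induction rule: pth.induct) auto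

lemma pth_deg: "pth tf hf F x y D \<Longrightarrow>
   card {d\<in>D. tf d = z} + (if z = y then 1 else 0) = card {d\<in>D. hf d = z} + (if z = x then 1 else 0)"
proof (induction rule: pth.induct)
  case (nil x) then show ?case by simp
next
  case (cons w y D d x)
  have fin: "finite D" using pth_sub[OF cons(1)] by blast
  have dD: "d \<notin> D" using cons(3,5) by auto
  have t: "{d'\<in>insert d D. tf d' = z} = (if x = z then insert d {d'\<in>D. tf d' = z} else {d'\<in>D. tf d' = z})"
    using cons(3) by auto
  have h: "{d'\<in>insert d D. hf d' = z} = (if w = z then insert d {d'\<in>D. hf d' = z} else {d'\<in>D. hf d' = z})"
    using cons(4) by auto
  show ?case using cons.IH dD fin unfolding t h by (auto split: if_splits)
qed

lemma ar_mono: "A \<subseteq> B \<Longrightarrow> ar tf hf A \<subseteq> ar tf hf B" by (auto simp: ar_def)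

lemma pth_walk: "pth tf hf F x y D \<Longrightarrow> (x, y) \<in> (ar tf hf D)\<^sup>*"
proof (induction rule: pth.induct)
  case (nil x) then show ?case by simp
next
  case (cons w y D d x)
  have "(x, w) \<in> ar tf hf (insert d D)" using cons(3,4) by (auto simp: ar_def)
  moreover have "(w, y) \<in> (ar tf hf (insert d D))\<^sup>*"
    using cons.IH rtrancl_mono[OF ar_mono[of D "insert d D"]] by blast
  ultimately show ?case by (rule converse_rtrancl_into_rtrancl)
qed

lemma pth_reach: "pth tf hf F x y D \<Longrightarrow> d \<in> D \<Longrightarrow>
    (x, tf d) \<in> (ar tf hf D)\<^sup>* \<and> (hf d, y) \<in> (ar tf hf D)\<^sup>*"
proof (induction arbitrary: d rule: pth.induct)
  case (nil x) then show ?case by simp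
next
  case (cons w y D d0 x d)
  have mono: "(ar tf hf D)\<^sup>* \<subseteq> (ar tf hf (insert d0 D))\<^sup>*" by (rule rtrancl_mono[OF ar_mono]) blast
  have step: "(x, w) \<in> ar tf hf (insert d0 D)" using cons(3,4) by (auto simp: ar_def)
  show ?case
  proof (cases "d = d0")
    case True
    then show ?thesis using cons(3,4) pth_walk[OF cons(1)] mono by auto
  next
    case False
    then have "d \<in> D" using cons.prems by blast
    from cons.IH[OF this] have "(w, tf d) \<in> (ar tf hf D)\<^sup>*" "(hf d, y) \<in> (ar tf hf D)\<^sup>*" by auto
    then show ?thesis using mono step by (meson converse_rtrancl_into_rtrancl subsetD)
  qed
qed

lemma pth_cut: "pth tf hf F w y D \<Longrightarrow> x \<in> insert w (tf ` D \<union> hf ` D) \<Longrightarrow> \<exists>D'. pth tf hf F x y D'"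
proof (induction rule: pth.induct)
  case (nil x0) then show ?case by (auto intro: pth.nil)
next
  case (cons w y D d x0)
  show ?case
  proof (cases "x = x0")
    case True then show ?thesis using pth.cons[OF cons(1-5)] by blast
  next
    case False
    then have "x \<in> insert w (tf ` D \<union> hf ` D)" using cons(3,4) cons.prems by auto
    then show ?thesis using cons.IH by blast
  qed
qed

lemma pth_exists: "(x, y) \<in> (ar tf hf F)\<^sup>* \<Longrightarrow> \<exists>D. pth tf hf F x y D"
proof (induction rule: converse_rtrancl_induct)
  case base then show ?case by (auto intro: pth.nil)
next
  case (step x z)
  then obtain D where D: "pth tf hf F z y D" by blast
  obtain d where d: "d \<in> F" "tf d = x" "hf d = z" using step(1) by (auto simp: ar_def)
  show ?case
  proof (cases "x \<in> insert z (tf ` D \<union> hf ` D)")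
    case True then show ?thesis using pth_cut[OF D] by blast
  next
    case False then show ?thesis using pth.cons[OF D d] by blast
  qed
qed

lemma sum_card_fib:
  assumes "finite A" "finite D"
  shows "(\<Sum>z\<in>A. card {d\<in>D. h d = z}) = card {d\<in>D. h d \<in> A}"
  using assms(1)
proof (induction rule: finite_induct)
  case empty then show ?case by simp
next
  case (insert z A)
  have "{d\<in>D. h d \<in> insert z A} = {d\<in>D. h d = z} \<union> {d\<in>D. h d \<in> A}" by auto
  moreover have "card (\<dots>) = card {d\<in>D. h d = z} + card {d\<in>D. h d \<in> A}"
    using assms(2) insert(2) by (intro card_Un_disjoint) auto
  ultimately show ?case using insert by simp
qed

context dc begin

lemma arcs_ar: "arcs eps F = ar (otail G eps) (ohead G eps) F"
  by (simp add: arcs_def ar_def)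

lemma idg_split:
  assumes "z \<in> V"
  shows "idg H eps' z + card {d\<in>E'. eps d \<noteq> eps' d \<and> ohead G eps d = z} =
         idg H eps z + card {d\<in>E'. eps d \<noteq> eps' d \<and> otail G eps d = z}"
proof -
  have a: "card {d\<in>E'. ohead G eps' d = z} =
      card {d\<in>E'. eps d = eps' d \<and> ohead G eps' d = z} + card {d\<in>E'. \<not> eps d = eps' d \<and> ohead G eps' d = z}"
    by (rule card_split2[OF finE(2)])
  have b: "card {d\<in>E'. ohead G eps d = z} =
      card {d\<in>E'. eps d = eps' d \<and> ohead G eps d = z} + card {d\<in>E'. \<not> eps d = eps' d \<and> ohead G eps d = z}"
    by (rule card_split2[OF finE(2)])
  have c: "{d\<in>E'. eps d = eps' d \<and> ohead G eps' d = z} = {d\<in>E'. eps d = eps' d \<and> ohead G eps d = z}"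
    by (auto simp: ohead_def)
  have d: "{d\<in>E'. \<not> eps d = eps' d \<and> ohead G eps' d = z} = {d\<in>E'. eps d \<noteq> eps' d \<and> otail G eps d = z}"
    by (auto simp: ohead_def otail_def)
  show ?thesis using assms a b c d by (simp add: idg_def)
qed

lemma diff_reach:
  assumes aV: "a \<in> V" and lt: "idg H eps a < idg H eps' a"
    and eq: "\<And>z. z \<noteq> a \<Longrightarrow> z \<noteq> b \<Longrightarrow> idg H eps' z = idg H eps z"
  shows "(a, b) \<in> (arcs eps E')\<^sup>*"
proof (rule ccontr)
  assume nb: "(a, b) \<notin> (arcs eps E')\<^sup>*"
  define D where "D = {d\<in>E'. eps d \<noteq> eps' d}"
  define R where "R = {z\<in>V. (a, z) \<in> (arcs eps D)\<^sup>*}"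
  have finD: "finite D" using finE(2) by (auto simp: D_def)
  have finR: "finite R" using wf by (auto simp: R_def wf_graph_def)
  have DE: "D \<subseteq> E'" by (auto simp: D_def)
  have mono: "(arcs eps D)\<^sup>* \<subseteq> (arcs eps E')\<^sup>*" by (rule rtrancl_mono) (use DE in \<open>auto simp: arcs_def\<close>)
  have bR: "b \<notin> R" using nb mono by (auto simp: R_def)
  have aR: "a \<in> R" using aV by (auto simp: R_def)
  have key: "(\<Sum>z\<in>R. idg H eps' z + card {d\<in>D. ohead G eps d = z}) =
             (\<Sum>z\<in>R. idg H eps z + card {d\<in>D. otail G eps d = z})"
    using idg_split[of _ eps' eps] by (intro sum.cong) (auto simp: R_def D_def)
  have s1: "(\<Sum>z\<in>R. card {d\<in>D. ohead G eps d = z}) = card {d\<in>D. ohead G eps d \<in> R}"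
    by (rule sum_card_fib[OF finR finD])
  have s2: "(\<Sum>z\<in>R. card {d\<in>D. otail G eps d = z}) = card {d\<in>D. otail G eps d \<in> R}"
    by (rule sum_card_fib[OF finR finD])
  have sub: "{d\<in>D. otail G eps d \<in> R} \<subseteq> {d\<in>D. ohead G eps d \<in> R}"
  proof
    fix d assume d: "d \<in> {d\<in>D. otail G eps d \<in> R}"
    then have "(otail G eps d, ohead G eps d) \<in> arcs eps D" by (auto simp: arcs_def)
    moreover have "ohead G eps d \<in> V" using d DE ends_V by blast
    ultimately show "d \<in> {d\<in>D. ohead G eps d \<in> R}" using d by (auto simp: R_def intro: rtrancl_into_rtrancl)
  qed
  have c: "card {d\<in>D. otail G eps d \<in> R} \<le> card {d\<in>D. ohead G eps d \<in> R}"
    by (rule card_mono[OF _ sub]) (use finD in auto)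
  have r1: "(\<Sum>z\<in>R. idg H eps' z) = idg H eps' a + (\<Sum>z\<in>R - {a}. idg H eps z)"
  proof -
    have "(\<Sum>z\<in>R. idg H eps' z) = idg H eps' a + (\<Sum>z\<in>R - {a}. idg H eps' z)"
      by (rule sum.remove[OF finR aR])
    moreover have "(\<Sum>z\<in>R - {a}. idg H eps' z) = (\<Sum>z\<in>R - {a}. idg H eps z)"
      using eq bR by (intro sum.cong) auto
    ultimately show ?thesis by simp
  qed
  have r2: "(\<Sum>z\<in>R. idg H eps z) = idg H eps a + (\<Sum>z\<in>R - {a}. idg H eps z)"
    by (rule sum.remove[OF finR aR])
  from key have "(\<Sum>z\<in>R. idg H eps' z) + card {d\<in>D. ohead G eps d \<in> R} =
      (\<Sum>z\<in>R. idg H eps z) + card {d\<in>D. otail G eps d \<in> R}"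
    unfolding sum.distrib s1 s2 .
  then show False using r1 r2 c lt by linarith
qed

end

context dc begin

lemma reverse_path:
  assumes o: "eps \<in> orientations H" and p: "PP eps" and ab: "(a = u \<and> b = v) \<or> (a = v \<and> b = u)"
    and r: "(a, b) \<in> (arcs eps E')\<^sup>*"
  shows "\<exists>eps'. eps' \<in> orientations H \<and> PP eps' \<and>
     (\<forall>z. idg H eps' z + (if z = b then 1 else 0) = idg H eps z + (if z = a then 1 else 0))"
proof -
  let ?tf = "otail G eps" and ?hf = "ohead G eps"
  have abV: "a \<in> V" "b \<in> V" using ab uv by auto
  obtain D where D: "pth ?tf ?hf E' a b D" using pth_exists[OF r[unfolded arcs_ar]] by blast
  have DE: "D \<subseteq> E'" and finD: "finite D" using pth_sub[OF D] by auto
  define eps' where "eps' = (\<lambda>d. if d \<in> D then \<not> eps d else eps d)"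
  have rt: "d \<in> D \<Longrightarrow> otail G eps' d = ?hf d" "d \<in> D \<Longrightarrow> ohead G eps' d = ?tf d" for d
    by (auto simp: eps'_def otail_def ohead_def)
  have nt: "d \<notin> D \<Longrightarrow> otail G eps' d = ?tf d" "d \<notin> D \<Longrightarrow> ohead G eps' d = ?hf d" for d
    by (auto simp: eps'_def otail_def ohead_def)
  have o': "eps' \<in> orientations H" using o DE by (auto simp: orientations_def eps'_def)
  have deg: "idg H eps' z + (if z = b then 1 else 0) = idg H eps z + (if z = a then 1 else 0)" for z
  proof (cases "z \<in> V")
    case False then show ?thesis using abV by (auto simp: idg_def)
  next
    case True
    have dd: "{d\<in>E'. eps d \<noteq> eps' d} = D" using DE by (auto simp: eps'_def)
    have "idg H eps' z + card {d\<in>E'. eps d \<noteq> eps' d \<and> ?hf d = z} =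
         idg H eps z + card {d\<in>E'. eps d \<noteq> eps' d \<and> ?tf d = z}"
      by (rule idg_split[OF True])
    moreover have "{d\<in>E'. eps d \<noteq> eps' d \<and> ?hf d = z} = {d\<in>D. ?hf d = z}"
      "{d\<in>E'. eps d \<noteq> eps' d \<and> ?tf d = z} = {d\<in>D. ?tf d = z}" using dd by auto
    ultimately show ?thesis using pth_deg[OF D, of z] by simp
  qed
  have keep: "dir_edges H eps' X Y \<noteq> {}"
    if vp: "vpartition G X Y" and s: "a \<in> X \<longleftrightarrow> b \<in> X" and ne: "dir_edges H eps X Y \<noteq> {}" for X Y
  proof -
    obtain d where d: "d \<in> dir_edges H eps X Y" using ne by blast
    then have d': "d \<in> E'" "?tf d \<in> X" "?hf d \<in> Y" by (auto simp: dir_th)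
    show ?thesis
    proof (cases "d \<in> D")
      case False
      then have "d \<in> dir_edges H eps' X Y" using d' nt by (auto simp: dir_th)
      then show ?thesis by blast
    next
      case True
      have Y: "z \<in> Y \<longleftrightarrow> z \<in> V \<and> z \<notin> X" for z using vp by (auto simp: vpartition_def)
      have "\<exists>p q. (p, q) \<in> ar ?tf ?hf D \<and> p \<in> Y \<and> q \<notin> Y"
      proof (cases "b \<in> X")
        case True
        have r1: "(?hf d, b) \<in> (ar ?tf ?hf D)\<^sup>*" using pth_reach[OF D \<open>d \<in> D\<close>] by blast
        have "b \<notin> Y" using True Y by blast
        from rtrancl_cross[OF r1 d'(3) this] show ?thesis by blast
      next
        case False
        then have aY: "a \<in> Y" using s Y abV by blast
        have r2: "(a, ?tf d) \<in> (ar ?tf ?hf D)\<^sup>*" using pth_reach[OF D \<open>d \<in> D\<close>] by blast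
        have "?tf d \<notin> Y" using d'(2) Y by blast
        from rtrancl_cross[OF r2 aY this] show ?thesis by blast
      qed
      then obtain p q where pq: "(p, q) \<in> ar ?tf ?hf D" "p \<in> Y" "q \<notin> Y" by blast
      then obtain d2 where d2: "d2 \<in> D" "?tf d2 = p" "?hf d2 = q" by (auto simp: ar_def)
      have "q \<in> V" using d2 DE ends_V by blast
      then have "q \<in> X" using pq Y by blast
      then have "d2 \<in> dir_edges H eps' X Y" using d2 DE rt pq by (auto simp: dir_th)
      then show ?thesis by blast
    qed
  qed
  have p': "PP eps'" unfolding PP_def
  proof (intro allI impI)
    fix S T assume st: "vpartition G S T" "u \<in> S \<longleftrightarrow> v \<in> S" "cut_edges H S T \<noteq> {}"
    have ts: "vpartition G T S" using st(1) vpartition_sym by blast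
    have s1: "a \<in> S \<longleftrightarrow> b \<in> S" using ab st(2) by blast
    have s2: "a \<in> T \<longleftrightarrow> b \<in> T" using s1 st(1) abV sides by blast
    have "dir_edges H eps S T \<noteq> {} \<and> dir_edges H eps T S \<noteq> {}" using p st unfolding PP_def by blast
    then show "dir_edges H eps' S T \<noteq> {} \<and> dir_edges H eps' T S \<noteq> {}"
      using keep[OF st(1) s1] keep[OF ts s2] by blast
  qed
  show ?thesis using o' p' deg by blast
qed

lemma PP_D:
  assumes "PP eps" "vpartition G S T" "u \<in> S \<longleftrightarrow> v \<in> S"
  shows "dir_edges H eps S T \<noteq> {} \<and> dir_edges H eps T S \<noteq> {}"
proof -
  have c: "cut_edges H S T \<noteq> {}" by (rule H_cut_ne[OF assms(2)])
  show ?thesis using assms(1)[unfolded PP_def, rule_format, OF assms(2) assms(3) c] .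
qed

lemma not_Qb_Qa:
  assumes p: "PP eps" and nq: "\<not> Qb eps"
  shows "Qa eps"
proof (rule ccontr)
  assume na: "\<not> Qa eps"
  define Ru where "Ru = {z\<in>V. (u, z) \<in> (arcs eps E')\<^sup>*}"
  define Rv where "Rv = {z\<in>V. (v, z) \<in> (arcs eps E')\<^sup>*}"
  have cl: "ohead G eps d \<in> Ru" if "d \<in> E'" "otail G eps d \<in> Ru" for d
  proof -
    have "(otail G eps d, ohead G eps d) \<in> arcs eps E'" using that by (auto simp: arcs_def)
    moreover have "(u, otail G eps d) \<in> (arcs eps E')\<^sup>*" using that(2) by (simp add: Ru_def)
    ultimately have "(u, ohead G eps d) \<in> (arcs eps E')\<^sup>*" by (meson rtrancl_into_rtrancl)
    moreover have "ohead G eps d \<in> V" using that(1) ends_V by blast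
    ultimately show ?thesis by (simp add: Ru_def)
  qed
  have cl2: "ohead G eps d \<in> Rv" if "d \<in> E'" "otail G eps d \<in> Rv" for d
  proof -
    have "(otail G eps d, ohead G eps d) \<in> arcs eps E'" using that by (auto simp: arcs_def)
    moreover have "(v, otail G eps d) \<in> (arcs eps E')\<^sup>*" using that(2) by (simp add: Rv_def)
    ultimately have "(v, ohead G eps d) \<in> (arcs eps E')\<^sup>*" by (meson rtrancl_into_rtrancl)
    moreover have "ohead G eps d \<in> V" using that(1) ends_V by blast
    ultimately show ?thesis by (simp add: Rv_def)
  qed
  have uR: "u \<in> Ru" "v \<in> Rv" "v \<notin> Ru" "u \<notin> Rv" using uv nq na by (auto simp: Ru_def Rv_def Qa_def Qb_def)
  have RV: "Ru \<subseteq> V" "Rv \<subseteq> V" by (auto simp: Ru_def Rv_def)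
  have X: "Ru \<inter> Rv = {}"
  proof (rule ccontr)
    assume "Ru \<inter> Rv \<noteq> {}"
    let ?X = "Ru \<inter> Rv"
    have vp: "vpartition G ?X (V - ?X)" using \<open>?X \<noteq> {}\<close> uR RV uv by (auto simp: vpartition_def)
    have "u \<in> ?X \<longleftrightarrow> v \<in> ?X" using uR by blast
    then have "dir_edges H eps ?X (V - ?X) \<noteq> {}" using PP_D[OF p vp] by blast
    then obtain d where "d \<in> dir_edges H eps ?X (V - ?X)" by blast
    then have "d \<in> E'" "otail G eps d \<in> ?X" "ohead G eps d \<notin> ?X" by (auto simp: dir_th)
    then show False using cl cl2 by blast
  qed
  have Y: "Ru \<union> Rv = V"
  proof (rule ccontr)
    assume "Ru \<union> Rv \<noteq> V"
    let ?Y = "Ru \<union> Rv"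
    have vp: "vpartition G ?Y (V - ?Y)" using \<open>?Y \<noteq> V\<close> uR RV by (auto simp: vpartition_def)
    have "u \<in> ?Y \<longleftrightarrow> v \<in> ?Y" using uR by blast
    then have "dir_edges H eps ?Y (V - ?Y) \<noteq> {}" using PP_D[OF p vp] by blast
    then obtain d where "d \<in> dir_edges H eps ?Y (V - ?Y)" by blast
    then have "d \<in> E'" "otail G eps d \<in> ?Y" "ohead G eps d \<notin> ?Y" by (auto simp: dir_th)
    then show False using cl cl2 by blast
  qed
  have vp: "vpartition G Ru Rv" using X Y uR by (auto simp: vpartition_def)
  obtain d where "d \<in> cut_edges H Ru Rv" using H_cut_ne[OF vp] by blast
  then have dd: "d \<in> edges H \<and> ((otail H eps d \<in> Ru \<and> ohead H eps d \<in> Rv) \<or> (otail H eps d \<in> Rv \<and> ohead H eps d \<in> Ru))"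
    by (simp only: cut_th[of d H Ru Rv eps])
  then have d1: "d \<in> E'" by simp
  have d2: "(otail G eps d \<in> Ru \<and> ohead G eps d \<in> Rv) \<or> (otail G eps d \<in> Rv \<and> ohead G eps d \<in> Ru)"
    using dd by simp
  then show False
  proof
    assume a: "otail G eps d \<in> Ru \<and> ohead G eps d \<in> Rv"
    then have "ohead G eps d \<in> Ru" using cl[OF d1] by blast
    then show False using a X by blast
  next
    assume a: "otail G eps d \<in> Rv \<and> ohead G eps d \<in> Ru"
    then have "ohead G eps d \<in> Rv" using cl2[OF d1] by blast
    then show False using a X by blast
  qed
qed

end

lemma finite_orient: "finite (edges X) \<Longrightarrow> finite (orientations X)"
proof -
  assume fin: "finite (edges X)"
  have "orientations X \<subseteq> (\<lambda>S x. x \<in> S) ` Pow (edges X)"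
  proof
    fix eps assume "eps \<in> orientations X"
    then have "{x. eps x} \<in> Pow (edges X)" by (auto simp: orientations_def)
    moreover have "eps = (\<lambda>x. x \<in> {x. eps x})" by simp
    ultimately show "eps \<in> (\<lambda>S x. x \<in> S) ` Pow (edges X)" by blast
  qed
  moreover have "finite ((\<lambda>S x. x \<in> S) ` Pow (edges X))" using fin by simp
  ultimately show ?thesis by (rule finite_subset)
qed

context dc begin

definition Ors where "Ors = {eps \<in> orientations H. PP eps}"

lemma finO: "finite Ors"
  using finite_orient[of H] finE by (auto simp: Ors_def intro: finite_subset)

lemma L1u: "eps \<in> Ors \<Longrightarrow> Qb eps \<Longrightarrow>
  \<exists>eps'\<in>Ors. \<forall>z. idg H eps' z + (if z = v then 1 else 0) = idg H eps z + (if z = u then 1 else 0)"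
  using reverse_path[of eps u v] by (auto simp: Ors_def Qb_def)

lemma L1v: "eps \<in> Ors \<Longrightarrow> Qa eps \<Longrightarrow>
  \<exists>eps'\<in>Ors. \<forall>z. idg H eps' z + (if z = u then 1 else 0) = idg H eps z + (if z = v then 1 else 0)"
  using reverse_path[of eps v u] by (auto simp: Ors_def Qa_def)

lemma F1: assumes "eps \<in> Ors" "eps1 \<in> Ors" "idg H eps = idg H eps1" "Qb eps1" shows "Qb eps"
proof -
  obtain eps2 where e2: "eps2 \<in> Ors"
    "\<And>z. idg H eps2 z + (if z = v then 1 else 0) = idg H eps1 z + (if z = u then 1 else 0)"
    using L1u[OF assms(2,4)] by blast
  have "idg H eps u < idg H eps2 u" using e2(2)[of u] uv assms(3) by simp
  moreover have "idg H eps2 z = idg H eps z" if "z \<noteq> u" "z \<noteq> v" for z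
    using e2(2)[of z] that assms(3) by simp
  ultimately show ?thesis unfolding Qb_def using diff_reach[OF uv(1)] by blast
qed

lemma add1_inj: "inj (add1 w)"
proof (rule injI, rule ext)
  fix a b :: "'v \<Rightarrow> nat" and x assume "add1 w a = add1 w b"
  then have "add1 w a x = add1 w b x" by simp
  then show "a x = b x" by (cases "x = w") (simp_all add: add1_def)
qed

lemma BO_G_img: "idg G ` BO G = add1 v ` (idg H ` {eps\<in>Ors. Qa eps}) \<union> add1 u ` (idg H ` {eps\<in>Ors. Qb eps})"
proof
  show "idg G ` BO G \<subseteq> add1 v ` (idg H ` {eps\<in>Ors. Qa eps}) \<union> add1 u ` (idg H ` {eps\<in>Ors. Qb eps})"
  proof
    fix x assume "x \<in> idg G ` BO G"
    then obtain eps where eps: "eps \<in> BO G" "x = idg G eps" by blast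
    then have o: "eps \<in> orientations G" "tc G eps" using BO_char[OF finE(1)] by auto
    let ?e0 = "eps(e := False)"
    have o0: "?e0 \<in> orientations H" using o(1) by (auto simp: orientations_def)
    have t: "PP ?e0" "if eps e then Qa ?e0 else Qb ?e0" using o(2) tc_G by auto
    have x: "x = add1 (if eps e then v else u) (idg H ?e0)" using eps(2) idg_G e_head by simp
    show "x \<in> add1 v ` (idg H ` {eps\<in>Ors. Qa eps}) \<union> add1 u ` (idg H ` {eps\<in>Ors. Qb eps})"
    proof (cases "eps e")
      case True
      then show ?thesis using t o0 x by (auto simp: Ors_def)
    next
      case False
      then show ?thesis using t o0 x by (auto simp: Ors_def)
    qed
  qed
next
  show "add1 v ` (idg H ` {eps\<in>Ors. Qa eps}) \<union> add1 u ` (idg H ` {eps\<in>Ors. Qb eps}) \<subseteq> idg G ` BO G"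
  proof
    fix x assume "x \<in> add1 v ` (idg H ` {eps\<in>Ors. Qa eps}) \<union> add1 u ` (idg H ` {eps\<in>Ors. Qb eps})"
    then consider eps0 where "eps0 \<in> Ors" "Qa eps0" "x = add1 v (idg H eps0)"
      | eps0 where "eps0 \<in> Ors" "Qb eps0" "x = add1 u (idg H eps0)" by blast
    then show "x \<in> idg G ` BO G"
    proof cases
      case 1
      let ?eps = "eps0(e := True)"
      have z: "eps0 e = False" using 1(1) by (auto simp: Ors_def orientations_def)
      then have bk: "?eps(e := False) = eps0" by (auto simp: fun_eq_iff)
      have "?eps \<in> orientations G" using 1(1) eE by (auto simp: Ors_def orientations_def)
      moreover have "tc G ?eps" unfolding tc_G bk using 1 by (auto simp: Ors_def)
      ultimately have "?eps \<in> BO G" using BO_char[OF finE(1)] by auto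
      moreover have "idg G ?eps = x" using idg_G[of ?eps] bk e_head 1(3) by simp
      ultimately show ?thesis by (metis image_eqI)
    next
      case 2
      have z: "eps0 e = False" using 2(1) by (auto simp: Ors_def orientations_def)
      then have bk: "eps0(e := False) = eps0" by (auto simp: fun_eq_iff)
      have "eps0 \<in> orientations G" using 2(1) by (auto simp: Ors_def orientations_def)
      moreover have "tc G eps0" unfolding tc_G bk using 2 z by (auto simp: Ors_def)
      ultimately have "eps0 \<in> BO G" using BO_char[OF finE(1)] by auto
      moreover have "idg G eps0 = x" using idg_G[of eps0] bk e_head 2(3) z by simp
      ultimately show ?thesis by (metis image_eqI)
    qed
  qed
qed

lemma step_sub: "add1 u ` (idg H ` {eps\<in>Ors. Qb eps}) \<subseteq> add1 v ` (idg H ` {eps\<in>Ors. Qa eps})"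
proof
  fix x assume "x \<in> add1 u ` (idg H ` {eps\<in>Ors. Qb eps})"
  then obtain eps where eps: "eps \<in> Ors" "Qb eps" "x = add1 u (idg H eps)" by blast
  obtain eps' where e': "eps' \<in> Ors"
    "\<And>z. idg H eps' z + (if z = v then 1 else 0) = idg H eps z + (if z = u then 1 else 0)"
    using L1u[OF eps(1,2)] by blast
  have eq: "add1 v (idg H eps') = add1 u (idg H eps)"
  proof
    fix z show "add1 v (idg H eps') z = add1 u (idg H eps) z"
      using e'(2)[of z] uv(3) by (auto simp: add1_def)
  qed
  have "idg H eps' v < idg H eps v" using e'(2)[of v] uv(3) by simp
  moreover have "idg H eps z = idg H eps' z" if "z \<noteq> v" "z \<noteq> u" for z
    using e'(2)[of z] that by simp
  ultimately have "Qa eps'" unfolding Qa_def using diff_reach[OF uv(2)] by blast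
  then have "idg H eps' \<in> idg H ` {eps\<in>Ors. Qa eps}" using e'(1) by blast
  then have "add1 v (idg H eps') \<in> add1 v ` (idg H ` {eps\<in>Ors. Qa eps})" by (rule imageI)
  then show "x \<in> add1 v ` (idg H ` {eps\<in>Ors. Qa eps})" using eq eps(3) by simp
qed

lemma card_G: "card (idg G ` BO G) = card (idg H ` {eps\<in>Ors. Qa eps})"
proof -
  have "idg G ` BO G = add1 v ` (idg H ` {eps\<in>Ors. Qa eps})"
    unfolding BO_G_img using step_sub by (rule Un_absorb2)
  moreover have "card (add1 v ` (idg H ` {eps\<in>Ors. Qa eps})) = card (idg H ` {eps\<in>Ors. Qa eps})"
    by (rule card_image) (rule inj_on_subset[OF add1_inj subset_UNIV])
  ultimately show ?thesis by simp
qed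

lemma BO_H_eq: "BO H = {eps\<in>Ors. Qa eps \<and> Qb eps}"
  using BO_char[of H] finE tc_H by (auto simp: Ors_def)

lemma BO_K_eq: "BO K = Ors"
  using BO_char[of K] finE tc_K by (auto simp: Ors_def K_edges orient_K)

lemma split_card: "card (idg H ` {eps\<in>Ors. Qa eps}) =
   card (idg H ` {eps\<in>Ors. Qa eps \<and> Qb eps}) + card (idg H ` {eps\<in>Ors. \<not> Qb eps})"
proof -
  have "idg H ` {eps\<in>Ors. Qa eps} = idg H ` {eps\<in>Ors. Qa eps \<and> Qb eps} \<union> idg H ` {eps\<in>Ors. \<not> Qb eps}"
    using not_Qb_Qa by (auto simp: Ors_def)
  moreover have "idg H ` {eps\<in>Ors. Qa eps \<and> Qb eps} \<inter> idg H ` {eps\<in>Ors. \<not> Qb eps} = {}"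
  proof (rule ccontr)
    assume "\<not> ?thesis"
    then obtain z where z: "z \<in> idg H ` {eps\<in>Ors. Qa eps \<and> Qb eps}" "z \<in> idg H ` {eps\<in>Ors. \<not> Qb eps}"
      by blast
    from z(1) obtain e1 where e1: "e1 \<in> Ors" "Qb e1" "z = idg H e1" by blast
    from z(2) obtain e2 where e2: "e2 \<in> Ors" "\<not> Qb e2" "z = idg H e2" by blast
    have "Qb e2" using F1[OF e2(1) e1(1) _ e1(2)] e1(3) e2(3) by simp
    then show False using e2(2) by blast
  qed
  moreover have "finite (idg H ` {eps\<in>Ors. Qa eps \<and> Qb eps})" "finite (idg H ` {eps\<in>Ors. \<not> Qb eps})"
    using finO by auto
  ultimately show ?thesis by (simp add: card_Un_disjoint)
qed

lemma pi_eq: assumes "\<pi> x = \<pi> y"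
  shows "\<And>z. z \<noteq> u \<Longrightarrow> z \<noteq> v \<Longrightarrow> x z = y z" "x u + x v = y u + y v"
proof -
  fix z assume "z \<noteq> u" "z \<noteq> v"
  then show "x z = y z" using fun_cong[OF assms, of z] by (simp add: \<pi>_def)
next
  show "x u + x v = y u + y v" using fun_cong[OF assms, of u] uv(3) by (simp add: \<pi>_def)
qed

lemma A2_card: "card (idg H ` {eps\<in>Ors. \<not> Qb eps}) = card (\<pi> ` idg H ` Ors)"
proof -
  let ?A = "idg H ` {eps\<in>Ors. \<not> Qb eps}"
  have inj: "inj_on \<pi> ?A"
  proof (rule inj_onI)
    fix x y assume "x \<in> ?A" "y \<in> ?A" and p: "\<pi> x = \<pi> y"
    then obtain e1 e2 where e: "e1 \<in> Ors" "\<not> Qb e1" "x = idg H e1" "e2 \<in> Ors" "\<not> Qb e2" "y = idg H e2"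
      by auto
    have o: "x z = y z" if "z \<noteq> u" "z \<noteq> v" for z using pi_eq(1)[OF p that] .
    have s: "x u + x v = y u + y v" by (rule pi_eq(2)[OF p])
    have "\<not> x u < y u"
    proof
      assume "x u < y u"
      then have "Qb e1" unfolding Qb_def using e o diff_reach[OF uv(1), of e1 e2 v] by simp
      then show False using e by blast
    qed
    moreover have "\<not> y u < x u"
    proof
      assume "y u < x u"
      then have "Qb e2" unfolding Qb_def using e o diff_reach[OF uv(1), of e2 e1 v] by simp
      then show False using e by blast
    qed
    ultimately have "x u = y u" by simp
    then have "x v = y v" using s by simp
    then show "x = y" using o \<open>x u = y u\<close> by (metis ext)
  qed
  have img: "\<pi> ` ?A = \<pi> ` idg H ` Ors"
  proof
    show "\<pi> ` ?A \<subseteq> \<pi> ` idg H ` Ors" by auto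
  next
    show "\<pi> ` idg H ` Ors \<subseteq> \<pi> ` ?A"
    proof
      fix w assume "w \<in> \<pi> ` idg H ` Ors"
      then obtain eps where eps: "eps \<in> Ors" "w = \<pi> (idg H eps)" by blast
      define C where "C = {e'\<in>Ors. \<pi> (idg H e') = w}"
      have finC: "finite C" using finO by (auto simp: C_def)
      have epsC: "eps \<in> C" using eps by (auto simp: C_def)
      define m where "m = Max ((\<lambda>e'. idg H e' u) ` C)"
      have "m \<in> (\<lambda>e'. idg H e' u) ` C" unfolding m_def using finC epsC by (intro Max_in) auto
      then obtain e2 where e2: "e2 \<in> C" "idg H e2 u = m" by blast
      have mx: "idg H e' u \<le> m" if "e' \<in> C" for e' unfolding m_def using finC that by (intro Max_ge) auto
      have "\<not> Qb e2"
      proof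
        assume "Qb e2"
        then obtain e3 where e3: "e3 \<in> Ors"
          "\<And>z. idg H e3 z + (if z = v then 1 else 0) = idg H e2 z + (if z = u then 1 else 0)"
          using L1u e2(1) by (auto simp: C_def)
        have "\<pi> (idg H e3) = \<pi> (idg H e2)"
        proof
          fix z show "\<pi> (idg H e3) z = \<pi> (idg H e2) z"
            using e3(2)[of z] e3(2)[of u] e3(2)[of v] uv(3) by (auto simp: \<pi>_def)
        qed
        then have "e3 \<in> C" using e3(1) e2(1) by (auto simp: C_def)
        then have "idg H e3 u \<le> m" by (rule mx)
        moreover have "idg H e3 u = m + 1" using e3(2)[of u] e2(2) uv(3) by simp
        ultimately show False by simp
      qed
      then show "w \<in> \<pi> ` ?A" using e2(1) by (auto simp: C_def)
    qed
  qed
  show ?thesis using card_image[OF inj] img by simp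
qed

lemma part_iv: "alpha G = alpha H + alpha K"
proof -
  have fH: "finite (edges H)" and fK: "finite (edges K)" using finE by (auto simp: K_edges)
  have "alpha G = card (idg G ` BO G)" by (rule alpha_card[OF finE(1)])
  also have "\<dots> = card (idg H ` {eps\<in>Ors. Qa eps \<and> Qb eps}) + card (\<pi> ` idg H ` Ors)"
    using card_G split_card A2_card by simp
  also have "card (idg H ` {eps\<in>Ors. Qa eps \<and> Qb eps}) = alpha H"
    using alpha_card[OF fH] BO_H_eq by simp
  also have "card (\<pi> ` idg H ` Ors) = alpha K"
  proof -
    have "idg K ` BO K = \<pi> ` idg H ` Ors" unfolding BO_K_eq idg_K image_image ..
    then show ?thesis using alpha_card[OF fK] by simp
  qed
  finally show ?thesis .
qed

end

theorem mainTheorem2: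
  fixes G :: "('v, 'e) mgraph"
  assumes "wf_graph G" and "connected_graph G"
  shows "((\<exists>v. verts G = {v}) \<and> edges G = {} \<longrightarrow> alpha G = 1)
    \<and> (\<forall>e\<in>edges G. is_loop G e \<longrightarrow> alpha G = alpha (delete_edge G e))
    \<and> (\<forall>e\<in>edges G. is_bridge G e \<longrightarrow> alpha G = 0)
    \<and> (\<forall>e\<in>edges G. \<not> is_bridge G e \<and> \<not> is_loop G e \<longrightarrow>
          alpha G = alpha (delete_edge G e) + alpha (contract_edge G e))"
proof (intro conjI ballI impI)
  assume h: "(\<exists>v. verts G = {v}) \<and> edges G = {}"
  then obtain w where "verts G = {w}" by blast
  then show "alpha G = 1" using part_i h by simp
next
  fix e assume "e \<in> edges G" "is_loop G e"
  then show "alpha G = alpha (delete_edge G e)" by (rule part_ii[OF assms(1)])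
next
  fix e assume "e \<in> edges G" "is_bridge G e"
  then show "alpha G = 0" using part_iii[OF assms(1)] by simp
next
  fix e assume h: "e \<in> edges G" "\<not> is_bridge G e \<and> \<not> is_loop G e"
  have "dc G e" unfolding dc_def using assms h by simp
  then interpret dc G e .
  show "alpha G = alpha (delete_edge G e) + alpha (contract_edge G e)" by (rule part_iv)
qed

end
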